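(* Let $T$ be a tree with exactly three pendant vertices $u_1,u_2,u_3$ and let $m$ be its major vertex, with $d(u_1,m)\equiv 0$, $d(u_2,m)\equiv 2$ and $d(u_3,m)\equiv 0\pmod 3$. Then $1$ is an eigenvalue of $L(T)$.
   Context: $L(T)=D(T)-A(T)$ is the Laplacian matrix of $T$. A pendant vertex has degree $1$; a major vertex has degree at least $3$. $d$ denotes distance. *)

theory Defs
  imports Complex_Main
begin

definition simple_graph :: "'a set \<Rightarrow> ('a \<Rightarrow> 'a \<Rightarrow> bool) \<Rightarrow> bool" where
  "simple_graph V E \<longleftrightarrow> finite V \<and> (\<forall>u v. E u v \<longrightarrow> u \<in> V \<and> v \<in> V)
     \<and> (\<forall>u v. E u v \<longrightarrow> E v u) \<and> (\<forall>v. \<not> E v v)"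

definition is_walk :: "'a set \<Rightarrow> ('a \<Rightarrow> 'a \<Rightarrow> bool) \<Rightarrow> 'a list \<Rightarrow> bool" where
  "is_walk V E p \<longleftrightarrow> p \<noteq> [] \<and> set p \<subseteq> V \<and> (\<forall>i. Suc i < length p \<longrightarrow> E (p ! i) (p ! Suc i))"

definition connected_graph :: "'a set \<Rightarrow> ('a \<Rightarrow> 'a \<Rightarrow> bool) \<Rightarrow> bool" where
  "connected_graph V E \<longleftrightarrow> V \<noteq> {} \<and>
     (\<forall>u\<in>V. \<forall>v\<in>V. \<exists>p. is_walk V E p \<and> hd p = u \<and> last p = v)"

definition is_cycle :: "'a set \<Rightarrow> ('a \<Rightarrow> 'a \<Rightarrow> bool) \<Rightarrow> 'a list \<Rightarrow> bool" where
  "is_cycle V E p \<longleftrightarrow> is_walk V E p \<and> distinct p \<and> length p \<ge> 3 \<and> E (last p) (hd p)"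

definition is_tree :: "'a set \<Rightarrow> ('a \<Rightarrow> 'a \<Rightarrow> bool) \<Rightarrow> bool" where
  "is_tree V E \<longleftrightarrow> simple_graph V E \<and> connected_graph V E \<and> (\<nexists>p. is_cycle V E p)"

definition degree :: "'a set \<Rightarrow> ('a \<Rightarrow> 'a \<Rightarrow> bool) \<Rightarrow> 'a \<Rightarrow> nat" where
  "degree V E v = card {w \<in> V. E v w}"

definition gdist :: "'a set \<Rightarrow> ('a \<Rightarrow> 'a \<Rightarrow> bool) \<Rightarrow> 'a \<Rightarrow> 'a \<Rightarrow> nat" where
  "gdist V E u v = (LEAST n. \<exists>p. is_walk V E p \<and> hd p = u \<and> last p = v \<and> length p = Suc n)"

definition laplacian_apply :: "'a set \<Rightarrow> ('a \<Rightarrow> 'a \<Rightarrow> bool) \<Rightarrow> ('a \<Rightarrow> real) \<Rightarrow> 'a \<Rightarrow> real" where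
  "laplacian_apply V E x v = real (degree V E v) * x v - (\<Sum>w\<in>{w \<in> V. E v w}. x w)"

definition laplacian_eigenvalue :: "'a set \<Rightarrow> ('a \<Rightarrow> 'a \<Rightarrow> bool) \<Rightarrow> real \<Rightarrow> bool" where
  "laplacian_eigenvalue V E lam \<longleftrightarrow>
     (\<exists>x. (\<exists>v\<in>V. x v \<noteq> 0) \<and> (\<forall>v\<in>V. laplacian_apply V E x v = lam * x v))"

end

theory Submission
  imports Defs
begin

lemma walk_iff: "is_walk V E p \<longleftrightarrow> p \<noteq> [] \<and> set p \<subseteq> V \<and> successively E p"
  unfolding is_walk_def successively_conv_nth by auto

lemma walk_rev:
  assumes "\<forall>u v. E u v \<longrightarrow> E v u" "is_walk V E p"
  shows "is_walk V E (rev p)"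
proof -
  have "successively (\<lambda>x y. E y x) p = successively E p"
    using assms(1) by (intro successively_cong) auto
  then show ?thesis using assms(2) by (simp add: walk_iff)
qed

lemma walk_join:
  assumes "is_walk V E p" "is_walk V E q" "last p = hd q"
  shows "is_walk V E (p @ tl q)"
proof -
  obtain x q' where q: "q = x # q'" using assms(2) by (cases q) (auto simp: walk_iff)
  show ?thesis using assms unfolding q walk_iff
    by (auto simp: successively_append_iff successively_Cons)
qed

lemma walk_snoc:
  assumes "is_walk V E p" "E (last p) w" "w \<in> V"
  shows "is_walk V E (p @ [w])"
  using assms by (auto simp: walk_iff successively_append_iff)

lemma walk_take:
  assumes "is_walk V E p" "k < length p"
  shows "is_walk V E (take (Suc k) p)"
proof -
  have "successively E (take (Suc k) p)"
    using assms unfolding walk_iff successively_conv_nth by auto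
  moreover have "set (take (Suc k) p) \<subseteq> V" using assms set_take_subset
    by (metis walk_iff order_trans)
  ultimately show ?thesis using assms by (auto simp: walk_iff)
qed

lemma walk_distinct:
  "is_walk V E p \<Longrightarrow> \<exists>q. is_walk V E q \<and> distinct q \<and> hd q = hd p \<and> last q = last p \<and> set q \<subseteq> set p"
proof (induction "length p" arbitrary: p rule: less_induct)
  case less
  show ?case
  proof (cases "distinct p")
    case True then show ?thesis using less by blast
  next
    case False
    then obtain xs ys zs y where p: "p = xs @ [y] @ ys @ [y] @ zs"
      using not_distinct_decomp by blast
    let ?q = "xs @ [y] @ zs"
    have w: "is_walk V E ?q" using less(2) unfolding p walk_iff
      by (auto simp: successively_append_iff successively_Cons)
    have "length ?q < length p" using p by simp
    then obtain q where "is_walk V E q \<and> distinct q \<and> hd q = hd ?q \<and> last q = last ?q \<and> set q \<subseteq> set ?q"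
      using less(1) w by blast
    moreover have "hd ?q = hd p" "last ?q = last p" "set ?q \<subseteq> set p" using p
      by (cases xs; auto; cases zs; auto)+
    ultimately show ?thesis by auto
  qed
qed


locale tr =
  fixes V :: "'a set" and E :: "'a \<Rightarrow> 'a \<Rightarrow> bool" and m :: 'a
  assumes tree: "is_tree V E" and mV: "m \<in> V"
begin

lemma symE: "E u v \<Longrightarrow> E v u" using tree by (auto simp: is_tree_def simple_graph_def)
lemma irr: "\<not> E v v" using tree by (auto simp: is_tree_def simple_graph_def)
lemma EV: "E u v \<Longrightarrow> u \<in> V \<and> v \<in> V" using tree by (auto simp: is_tree_def simple_graph_def)
lemma finV: "finite V" using tree by (auto simp: is_tree_def simple_graph_def)
lemma conn: "u \<in> V \<Longrightarrow> v \<in> V \<Longrightarrow> \<exists>p. is_walk V E p \<and> hd p = u \<and> last p = v"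
  using tree by (auto simp: is_tree_def connected_graph_def)
lemma nocyc: "\<not> is_cycle V E p" using tree by (auto simp: is_tree_def)

lemma gdist_ex:
  assumes "u \<in> V" "v \<in> V"
  shows "\<exists>p. is_walk V E p \<and> hd p = u \<and> last p = v \<and> length p = Suc (gdist V E u v)"
proof -
  obtain p where p: "is_walk V E p \<and> hd p = u \<and> last p = v" using conn assms by blast
  then have "p \<noteq> []" by (auto simp: is_walk_def)
  then have "\<exists>n. \<exists>p. is_walk V E p \<and> hd p = u \<and> last p = v \<and> length p = Suc n"
    using p by (intro exI[of _ "length p - 1"] exI[of _ p]) auto
  then show ?thesis unfolding gdist_def by (rule LeastI_ex)
qed

lemma gdist_le:
  assumes "is_walk V E p" "hd p = u" "last p = v"
  shows "gdist V E u v \<le> length p - 1"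
proof -
  have "p \<noteq> []" using assms by (auto simp: is_walk_def)
  then have "\<exists>p'. is_walk V E p' \<and> hd p' = u \<and> last p' = v \<and> length p' = Suc (length p - 1)"
    using assms by (intro exI[of _ p]) auto
  then show ?thesis unfolding gdist_def by (rule Least_le)
qed

lemma gdist_sym: "gdist V E u v = gdist V E v u"
proof -
  have "\<And>u v n. (\<exists>p. is_walk V E p \<and> hd p = u \<and> last p = v \<and> length p = Suc n) \<Longrightarrow>
     (\<exists>p. is_walk V E p \<and> hd p = v \<and> last p = u \<and> length p = Suc n)"
  proof -
    fix u v n assume "\<exists>p. is_walk V E p \<and> hd p = u \<and> last p = v \<and> length p = Suc n"
    then obtain p where p: "is_walk V E p" "hd p = u" "last p = v" "length p = Suc n" by blast
    have "p \<noteq> []" using p by (auto simp: is_walk_def)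
    then show "\<exists>p. is_walk V E p \<and> hd p = v \<and> last p = u \<and> length p = Suc n"
      using p walk_rev[of E V p] symE by (intro exI[of _ "rev p"]) (auto simp: hd_rev last_rev)
  qed
  then have "\<And>n. (\<exists>p. is_walk V E p \<and> hd p = u \<and> last p = v \<and> length p = Suc n) =
     (\<exists>p. is_walk V E p \<and> hd p = v \<and> last p = u \<and> length p = Suc n)" by blast
  then show ?thesis unfolding gdist_def by simp
qed

lemma gdist_0:
  assumes "u \<in> V" "v \<in> V" "gdist V E u v = 0" shows "u = v"
proof -
  obtain p where p: "is_walk V E p" "hd p = u" "last p = v" "length p = Suc 0"
    using gdist_ex[OF assms(1,2)] assms(3) by auto
  then obtain x where "p = [x]" by (cases p) auto
  then show ?thesis using p by auto
qed

definition D where "D v = gdist V E m v"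

lemma Dm: "D m = 0"
proof -
  have "is_walk V E [m]" using mV by (auto simp: is_walk_def)
  then show ?thesis using gdist_le[of "[m]" m m] by (auto simp: D_def)
qed

lemma D0: "v \<in> V \<Longrightarrow> D v = 0 \<longleftrightarrow> v = m"
  using gdist_0[OF mV] Dm by (auto simp: D_def)

lemma Dwalk: "v \<in> V \<Longrightarrow> \<exists>p. is_walk V E p \<and> hd p = m \<and> last p = v \<and> length p = Suc (D v)"
  using gdist_ex[OF mV] by (auto simp: D_def)

lemma Dle: "is_walk V E p \<Longrightarrow> hd p = m \<Longrightarrow> last p = v \<Longrightarrow> D v \<le> length p - 1"
  using gdist_le by (auto simp: D_def)

lemma D_nb: assumes "E v w" shows "D w \<le> D v + 1"
proof -
  obtain p where p: "is_walk V E p" "hd p = m" "last p = v" "length p = Suc (D v)"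
    using Dwalk EV assms by blast
  have "is_walk V E (p @ [w])" using walk_snoc[OF p(1)] p(3) assms EV by auto
  then have "D w \<le> length (p @ [w]) - 1" using Dle[of "p @ [w]" w] p
    by (auto simp: is_walk_def)
  then show ?thesis using p by simp
qed

lemma D_nb2: "E v w \<Longrightarrow> D v \<le> D w + 1" using D_nb symE by blast

lemma D_pos:
  assumes "is_walk V E p" "hd p = m" "k < length p"
  shows "D (p ! k) \<le> k"
proof -
  have w: "is_walk V E (take (Suc k) p)" using walk_take assms by blast
  have "take (Suc k) p \<noteq> []" using assms by auto
  then have "hd (take (Suc k) p) = m" using assms
    by (metis hd_take zero_less_Suc)
  moreover have "last (take (Suc k) p) = p ! k" using assms
    by (metis take_Suc_conv_app_nth last_snoc)
  ultimately show ?thesis using Dle[OF w] assms by (simp add: min_def split: if_splits)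
qed

lemma no_detour:
  assumes "E v w1" "E v w2" "w1 \<noteq> w2" "is_walk V E p" "hd p = w1" "last p = w2" "v \<notin> set p"
  shows False
proof -
  obtain q where q: "is_walk V E q" "distinct q" "hd q = w1" "last q = w2" "set q \<subseteq> set p"
    using walk_distinct[OF assms(4)] assms by auto
  obtain x q' where qq: "q = x # q'" using q by (cases q) (auto simp: is_walk_def)
  have "q' \<noteq> []" using qq q assms(3) by auto
  then have len: "length (v # q) \<ge> 3" using qq by (cases q') auto
  have "is_walk V E (v # q)" using q assms EV unfolding walk_iff
    by (auto simp: successively_Cons)
  moreover have "distinct (v # q)" using q assms by auto
  moreover have "E (last (v # q)) (hd (v # q))" using q qq assms symE by auto
  ultimately have "is_cycle V E (v # q)" using len by (auto simp: is_cycle_def)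
  then show False using nocyc by blast
qed


lemma short_set:
  assumes "is_walk V E p" "hd p = m" "last p = w" "length p = Suc (D w)" "v \<in> set p"
  shows "D v \<le> D w \<and> (v \<noteq> w \<longrightarrow> D v < D w)"
proof -
  obtain k where k: "k < length p" "v = p ! k" using assms(5) by (metis in_set_conv_nth)
  have "D v \<le> k" using D_pos assms k by blast
  moreover have "p \<noteq> []" using assms by auto
  moreover have "last p = p ! (length p - 1)" using \<open>p \<noteq> []\<close> by (rule last_conv_nth)
  then have "k = D w \<Longrightarrow> v = w" using k assms by simp
  ultimately show ?thesis using k assms by (cases "k = D w") auto
qed

lemma par_ex: assumes "v \<in> V" "v \<noteq> m" shows "\<exists>w. E v w \<and> D w + 1 = D v"
proof -
  obtain p where p: "is_walk V E p" "hd p = m" "last p = v" "length p = Suc (D v)"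
    using Dwalk assms by blast
  have Dv: "D v \<noteq> 0" using D0 assms by auto
  define w where "w = p ! (D v - 1)"
  have all: "\<forall>i. Suc i < length p \<longrightarrow> E (p ! i) (p ! Suc i)" using p(1) by (simp add: is_walk_def)
  have "E (p ! (D v - 1)) (p ! Suc (D v - 1))" using p(4) Dv all[rule_format, of "D v - 1"] by simp
  moreover have "p \<noteq> []" using p by auto
  then have "last p = p ! (length p - 1)" by (rule last_conv_nth)
  then have "p ! Suc (D v - 1) = v" using p Dv by simp
  ultimately have e: "E v w" unfolding w_def using symE by auto
  have "D w \<le> D v - 1" unfolding w_def using D_pos p Dv by auto
  then show ?thesis using D_nb2[OF e] e Dv by (intro exI[of _ w]) auto
qed

lemma join_rev:
  assumes "is_walk V E p1" "hd p1 = m" "last p1 = w1" "is_walk V E p2" "hd p2 = m" "last p2 = w2"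
  shows "is_walk V E (rev p1 @ tl p2) \<and> hd (rev p1 @ tl p2) = w1 \<and> last (rev p1 @ tl p2) = w2
     \<and> set (rev p1 @ tl p2) \<subseteq> set p1 \<union> set p2"
proof -
  have ne: "p1 \<noteq> []" "p2 \<noteq> []" using assms by (auto simp: is_walk_def)
  have "is_walk V E (rev p1 @ tl p2)" using walk_join[OF walk_rev[OF _ assms(1)] assms(4)]
    symE assms ne by (auto simp: last_rev)
  moreover have "hd (rev p1 @ tl p2) = w1" using ne assms by (simp add: hd_rev)
  moreover have "last (rev p1 @ tl p2) = w2" using ne assms
    by (cases p2) (auto simp: last_rev)
  moreover have "set (rev p1 @ tl p2) \<subseteq> set p1 \<union> set p2" using ne
    by (cases p2) auto
  ultimately show ?thesis by blast
qed

lemma par_uniq: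
  assumes "E v w1" "E v w2" "D w1 + 1 = D v" "D w2 + 1 = D v" shows "w1 = w2"
proof (rule ccontr)
  assume ne: "w1 \<noteq> w2"
  obtain p1 where p1: "is_walk V E p1" "hd p1 = m" "last p1 = w1" "length p1 = Suc (D w1)"
    using Dwalk assms EV by blast
  obtain p2 where p2: "is_walk V E p2" "hd p2 = m" "last p2 = w2" "length p2 = Suc (D w2)"
    using Dwalk assms EV by blast
  have "v \<notin> set p1" using short_set[OF p1] assms by force
  moreover have "v \<notin> set p2" using short_set[OF p2] assms by force
  ultimately show False using join_rev[OF p1(1-3) p2(1-3)] no_detour[OF assms(1,2) ne] by blast
qed

lemma no_eq: assumes "E v w" "D v = D w" shows False
proof -
  have V: "v \<in> V" "w \<in> V" using EV assms by auto
  have "v \<noteq> m"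
  proof
    assume "v = m"
    then have "w = m" using D0 V assms Dm by auto
    then show False using irr assms \<open>v = m\<close> by auto
  qed
  then obtain pv where pv: "E v pv" "D pv + 1 = D v" using par_ex V by blast
  have ne: "pv \<noteq> w" using pv assms by auto
  obtain p1 where p1: "is_walk V E p1" "hd p1 = m" "last p1 = pv" "length p1 = Suc (D pv)"
    using Dwalk pv EV by blast
  obtain p2 where p2: "is_walk V E p2" "hd p2 = m" "last p2 = w" "length p2 = Suc (D w)"
    using Dwalk V by blast
  have "v \<noteq> w" using irr assms by auto
  have "v \<notin> set p1" using short_set[OF p1] pv by force
  moreover have "v \<notin> set p2" using short_set[OF p2] assms \<open>v \<noteq> w\<close> by force
  ultimately show False using join_rev[OF p1(1-3) p2(1-3)] no_detour[OF pv(1) assms(1) ne] by blast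
qed

lemma nb_cases: assumes "E v w" shows "D w + 1 = D v \<or> D w = D v + 1"
proof -
  have "D v \<noteq> D w" using no_eq[OF assms] by blast
  then show ?thesis using D_nb[OF assms] D_nb2[OF assms] by linarith
qed


definition par where "par v = (SOME w. E v w \<and> D w + 1 = D v)"

lemma par: "v \<in> V \<Longrightarrow> v \<noteq> m \<Longrightarrow> E v (par v) \<and> D (par v) + 1 = D v"
  unfolding par_def using par_ex by (rule someI_ex)

lemma parV: "v \<in> V \<Longrightarrow> v \<noteq> m \<Longrightarrow> par v \<in> V" using par EV by blast

lemma par_child: assumes "E v c" "D c = D v + 1" shows "par c = v"
proof -
  have "c \<in> V" "c \<noteq> m" using EV assms Dm by auto
  have p: "E c (par c)" "D (par c) + 1 = D c" using par[OF \<open>c \<in> V\<close> \<open>c \<noteq> m\<close>] by auto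
  show ?thesis using par_uniq[OF p(1) symE[OF assms(1)] p(2)] assms by simp
qed

lemma par_nb: assumes "v \<in> V" "v \<noteq> m" "E v y" "D y + 1 = D v" shows "y = par v"
  using par_uniq[of v y "par v"] par assms by auto

definition top where "top v = (par ^^ (D v - 1)) v"

lemma funpow_par: "v \<in> V \<Longrightarrow> k \<le> D v \<Longrightarrow> (par ^^ k) v \<in> V \<and> D ((par ^^ k) v) = D v - k"
proof (induction k)
  case 0 then show ?case by simp
next
  case (Suc k)
  let ?u = "(par ^^ k) v"
  have u: "?u \<in> V" "D ?u = D v - k" using Suc by auto
  then have "?u \<noteq> m" using Suc Dm by auto
  then show ?case using par[OF u(1)] parV[OF u(1)] u by auto
qed

lemma top: assumes "v \<in> V" "v \<noteq> m" shows "top v \<in> V \<and> D (top v) = 1 \<and> E m (top v)"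
proof -
  have "D v \<noteq> 0" using D0 assms by auto
  then have t: "top v \<in> V" "D (top v) = 1" using funpow_par[OF assms(1), of "D v - 1"]
    unfolding top_def by auto
  then have "top v \<noteq> m" using Dm by auto
  have pt: "E (top v) (par (top v)) \<and> D (par (top v)) + 1 = D (top v)"
    using par[OF t(1) \<open>top v \<noteq> m\<close>] .
  then have "E (top v) (par (top v))" "D (par (top v)) = 0" using t by auto
  moreover have "par (top v) = m" using D0 parV t \<open>top v \<noteq> m\<close> calculation by auto
  ultimately show ?thesis using t symE by auto
qed

lemma top1: "D v = 1 \<Longrightarrow> top v = v" by (simp add: top_def)

lemma top_par: assumes "v \<in> V" "D v \<ge> 2" shows "top (par v) = top v"
proof -
  have "v \<noteq> m" using assms Dm by auto
  then have "D (par v) = D v - 1" using par assms by force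
  then have "top (par v) = (par ^^ (D v - 1 - 1)) (par v)" by (simp add: top_def)
  also have "\<dots> = (par ^^ Suc (D v - 1 - 1)) v" by (simp only: funpow_Suc_right o_apply)
  also have "Suc (D v - 1 - 1) = D v - 1" using assms by simp
  finally show ?thesis by (simp add: top_def)
qed

lemma top_child: assumes "E v c" "D c = D v + 1" "v \<noteq> m" shows "top c = top v"
proof -
  have "v \<in> V" "c \<in> V" using EV assms by auto
  moreover have "D v \<ge> 1" using D0 assms calculation by (cases "D v") auto
  ultimately show ?thesis using top_par[of c] par_child[OF assms(1,2)] assms by auto
qed

lemma leaf_below:
  assumes "c \<in> V" "c \<noteq> m"
  shows "\<exists>l k. l \<in> V \<and> (par ^^ k) l = c \<and> degree V E l = 1 \<and> D l = D c + k \<and> top l = top c"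
proof -
  define S where "S = {w \<in> V. \<exists>k. (par ^^ k) w = c \<and> D w = D c + k}"
  have fin: "finite S" using finV by (simp add: S_def)
  have cS: "c \<in> S" using assms by (auto simp: S_def intro: exI[of _ 0])
  define w where "w = (SOME w. w \<in> S \<and> D w = Max (D ` S))"
  have "Max (D ` S) \<in> D ` S" using fin cS by (intro Max_in) auto
  then have "\<exists>w. w \<in> S \<and> D w = Max (D ` S)" by auto
  then have wS: "w \<in> S" "D w = Max (D ` S)" unfolding w_def by (metis (mono_tags, lifting) someI_ex)+
  have maxw: "\<And>y. y \<in> S \<Longrightarrow> D y \<le> D w" using wS fin by auto
  obtain k where k: "w \<in> V" "(par ^^ k) w = c" "D w = D c + k" using wS by (auto simp: S_def)
  have Dc: "D c \<ge> 1" using D0 assms by (cases "D c") auto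
  then have wm: "w \<noteq> m" using k Dm by auto
  have nb: "{y \<in> V. E w y} = {par w}"
  proof
    show "{par w} \<subseteq> {y \<in> V. E w y}" using par[OF k(1) wm] parV[OF k(1) wm] by auto
  next
    show "{y \<in> V. E w y} \<subseteq> {par w}"
    proof
      fix y assume y: "y \<in> {y \<in> V. E w y}"
      show "y \<in> {par w}"
      proof (cases "D y + 1 = D w")
        case True then show ?thesis using par_nb[OF k(1) wm] y by auto
      next
        case False
        then have Dy: "D y = D w + 1" using nb_cases y by blast
        then have "par y = w" using par_child y by auto
        then have "(par ^^ Suc k) y = c" using k by (simp add: funpow_Suc_right del: funpow.simps)
        then have "y \<in> S" using y Dy k by (auto simp: S_def intro!: exI[of _ "Suc k"])
        then show ?thesis using maxw Dy by fastforce
      qed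
    qed
  qed
  then have "degree V E w = 1" by (simp add: degree_def)
  moreover have "top w = top c"
  proof -
    have "top w = (par ^^ (D c - 1 + k)) w" using k Dc by (simp add: top_def)
    also have "\<dots> = (par ^^ (D c - 1)) ((par ^^ k) w)" by (simp add: funpow_add)
    finally show ?thesis using k by (simp add: top_def)
  qed
  ultimately show ?thesis using k by blast
qed

end
definition pp :: "nat \<Rightarrow> real" where
  "pp k = (if k mod 6 = 0 \<or> k mod 6 = 1 then 1 else if k mod 6 = 3 \<or> k mod 6 = 4 then -1 else 0)"
lemma pp_rec: "pp (Suc j) = pp j + pp (Suc (Suc j))"
proof -
  have "j mod 6 < 6" by simp
  then consider "j mod 6 = 0" | "j mod 6 = 1" | "j mod 6 = 2" | "j mod 6 = 3" | "j mod 6 = 4" | "j mod 6 = 5" by linarith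
  then show ?thesis by cases (auto simp: pp_def mod_Suc)
qed
lemma pp_zero: "k mod 3 = 2 \<Longrightarrow> pp k = 0"
proof -
  assume "k mod 3 = 2"
  then have "k mod 6 = 2 \<or> k mod 6 = 5" by presburger
  then show ?thesis by (auto simp: pp_def)
qed
lemma pp012: "pp 0 = 1" "pp 1 = 1" "pp 2 = 0" by (auto simp: pp_def)

lemma ar: "(n::nat) mod 3 = 0 \<Longrightarrow> n \<noteq> 0 \<Longrightarrow> 3 \<le> n \<and> (n - 1) mod 3 = 2"
  by (cases n) (auto simp: mod_Suc split: if_splits)
lemma ar2: "(n::nat) mod 3 = 2 \<Longrightarrow> 2 \<le> n"
  by (rule ccontr) simp

theorem mainTheorem7:
  fixes V :: "'a set" and E :: "'a \<Rightarrow> 'a \<Rightarrow> bool" and u1 u2 u3 m :: 'a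
  assumes "is_tree V E"
    and "u1 \<noteq> u2" "u1 \<noteq> u3" "u2 \<noteq> u3"
    and "{v \<in> V. degree V E v = 1} = {u1, u2, u3}"
    and "m \<in> V" "degree V E m \<ge> 3"
    and "gdist V E u1 m mod 3 = 0"
    and "gdist V E u2 m mod 3 = 2"
    and "gdist V E u3 m mod 3 = 0"
  shows "laplacian_eigenvalue V E 1"
proof -
  interpret tr V E m using assms(1,6) by unfold_locales
  have L: "\<And>v. v \<in> V \<and> degree V E v = 1 \<longleftrightarrow> v \<in> {u1, u2, u3}" using assms(5) by blast
  have uV: "u1 \<in> V" "u2 \<in> V" "u3 \<in> V" and udeg: "degree V E u1 = 1" "degree V E u2 = 1" "degree V E u3 = 1"
    using L by auto
  have um: "u1 \<noteq> m" "u2 \<noteq> m" "u3 \<noteq> m" using udeg assms(7) by auto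
  have Du: "D u1 mod 3 = 0" "D u2 mod 3 = 2" "D u3 mod 3 = 0"
    using assms(8-10) gdist_sym by (auto simp: D_def)
  define t1 where "t1 = top u1"
  define t2 where "t2 = top u2"
  define t3 where "t3 = top u3"
  have tt: "t1 \<in> V \<and> D t1 = 1 \<and> E m t1" "t2 \<in> V \<and> D t2 = 1 \<and> E m t2" "t3 \<in> V \<and> D t3 = 1 \<and> E m t3"
    using top uV um by (auto simp: t1_def t2_def t3_def)
  define C where "C = {y \<in> V. E m y}"
  have CD: "\<And>y. y \<in> C \<Longrightarrow> D y = 1 \<and> y \<noteq> m \<and> y \<in> V"
  proof -
    fix y assume y: "y \<in> C"
    then have "D y + 1 = D m \<or> D y = D m + 1" using nb_cases C_def by auto
    then have "D y = 1" using Dm by auto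
    then show "D y = 1 \<and> y \<noteq> m \<and> y \<in> V" using y Dm by (auto simp: C_def)
  qed
  have Csub: "C \<subseteq> {t1, t2, t3}"
  proof
    fix y assume y: "y \<in> C"
    obtain l k where l: "l \<in> V" "degree V E l = 1" "top l = top y" using leaf_below CD[OF y] by blast
    have "top y = y" using CD[OF y] top1 by blast
    moreover have "l \<in> {u1, u2, u3}" using L l by blast
    ultimately show "y \<in> {t1, t2, t3}" using l by (auto simp: t1_def t2_def t3_def)
  qed
  have C3: "card C \<ge> 3" using assms(7) by (simp add: degree_def C_def)
  have "card {t1, t2, t3} \<ge> 3" using card_mono[OF _ Csub] C3 by (meson finite.emptyI finite.insertI le_trans)
  then have tdist: "t1 \<noteq> t2" "t1 \<noteq> t3" "t2 \<noteq> t3"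
    by (auto simp: card_insert_if split: if_splits)
  have Ceq: "C = {t1, t2, t3}" using Csub tt by (auto simp: C_def)
  have onechild: "\<And>v c1 c2. v \<in> V \<Longrightarrow> v \<noteq> m \<Longrightarrow> E v c1 \<Longrightarrow> E v c2 \<Longrightarrow> D c1 = D v + 1 \<Longrightarrow> D c2 = D v + 1 \<Longrightarrow> c1 = c2"
  proof (rule ccontr)
    fix v c1 c2 assume a: "v \<in> V" "v \<noteq> m" "E v c1" "E v c2" "D c1 = D v + 1" "D c2 = D v + 1" "c1 \<noteq> c2"
    have c: "c1 \<in> V" "c1 \<noteq> m" "c2 \<in> V" "c2 \<noteq> m" using a EV Dm by auto
    obtain l1 k1 where l1: "l1 \<in> V" "(par ^^ k1) l1 = c1" "degree V E l1 = 1" "D l1 = D c1 + k1" "top l1 = top c1"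
      using leaf_below c by blast
    obtain l2 k2 where l2: "l2 \<in> V" "(par ^^ k2) l2 = c2" "degree V E l2 = 1" "D l2 = D c2 + k2" "top l2 = top c2"
      using leaf_below c by blast
    have "l1 \<noteq> l2" using l1 l2 a by auto
    moreover have "top l1 = top l2" using l1 l2 top_child a by auto
    moreover have "l1 \<in> {u1, u2, u3}" "l2 \<in> {u1, u2, u3}" using L l1 l2 by auto
    ultimately show False using tdist by (auto simp: t1_def t2_def t3_def)
  qed
  define x where "x v = pp (D v + (if top v = t2 then 1 else 0))" for v
  have topm: "top m = m" by (simp add: top_def Dm)
  have xm: "x m = 1" using topm tt Dm by (auto simp: x_def pp012)
  have eq: "laplacian_apply V E x v = 1 * x v" if v: "v \<in> V" for v
  proof (cases "v = m")
    case True
    have nb: "{w \<in> V. E v w} = {t1, t2, t3}" using Ceq True by (simp add: C_def)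
    have x1: "x t1 = 1" "x t2 = 0" "x t3 = 1" using tt top1 tdist by (auto simp: x_def pp_def)
    show ?thesis using True nb tdist x1 xm
      by (simp add: laplacian_apply_def degree_def)
  next
    case False
    note vm = False
    show ?thesis
    proof (cases "degree V E v = 1")
      case True
      have nb: "{w \<in> V. E v w} = {par v}"
      proof -
        have "card {w \<in> V. E v w} = 1" using True by (simp add: degree_def)
        then obtain a where a: "{w \<in> V. E v w} = {a}" by (rule card_1_singletonE)
        moreover have "par v \<in> {w \<in> V. E v w}" using par parV v vm by auto
        ultimately show ?thesis by auto
      qed
      have Dpar: "D (par v) + 1 = D v" using par v vm by auto
      have "x (par v) = 0"
      proof -
        have vu: "v \<in> {u1, u2, u3}" using L v True by auto
        have Dv0: "D v \<noteq> 0" using D0 v vm by auto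
        show ?thesis
        proof (cases "v = u2")
          case True
          have "D v \<ge> 2" using ar2 Du True by blast
          then have "top (par v) = t2" using top_par v True t2_def by auto
          moreover have "(D v - 1) + 1 = D v" using Dv0 by simp
          ultimately show ?thesis using Dpar pp_zero Du True by (auto simp: x_def)
        next
          case False
          then have Dm3: "D v mod 3 = 0" "top v \<noteq> t2" using vu Du tdist by (auto simp: t1_def t3_def)
          have "D v \<ge> 3" using ar[OF Dm3(1) Dv0] by blast
          then have "top (par v) = top v" using top_par v by auto
          moreover have "(D v - 1) mod 3 = 2" using ar[OF Dm3(1) Dv0] by blast
          moreover have "D (par v) = D v - 1" using Dpar by simp
          ultimately show ?thesis using pp_zero Dm3 by (auto simp: x_def)
        qed
      qed
      then show ?thesis using nb True by (simp add: laplacian_apply_def)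
    next
      case False
      define w where "w = par v"
      have wp: "E v w" "D w + 1 = D v" "w \<in> V" using par parV v vm w_def by auto
      define Ch where "Ch = {y \<in> V. E v y \<and> D y = D v + 1}"
      have nbCh: "{y \<in> V. E v y} = insert w Ch"
      proof (intro equalityI subsetI)
        fix y assume y: "y \<in> {y \<in> V. E v y}"
        then have ey: "E v y" "y \<in> V" by auto
        show "y \<in> insert w Ch"
        proof (cases "D y + 1 = D v")
          case True
          then have "y = w" unfolding w_def by (rule par_nb[OF v vm ey(1)])
          then show ?thesis by simp
        next
          case False
          then have "D y = D v + 1" using nb_cases[OF ey(1)] by simp
          then show ?thesis using ey by (simp add: Ch_def)
        qed
      next
        fix y assume "y \<in> insert w Ch"
        then show "y \<in> {y \<in> V. E v y}" using wp by (auto simp: Ch_def)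
      qed
      have "Ch \<noteq> {}"
      proof
        assume "Ch = {}"
        then have "degree V E v = 1" using nbCh by (simp add: degree_def)
        then show False using False by simp
      qed
      then obtain c where c: "c \<in> Ch" by blast
      have "Ch = {c}"
      proof (intro equalityI subsetI)
        fix y assume "y \<in> Ch"
        then have "y = c" using onechild[OF v vm, of y c] c by (simp add: Ch_def)
        then show "y \<in> {c}" by simp
      qed (use c in simp)
      then have nb: "{y \<in> V. E v y} = {w, c}" using nbCh by simp
      have cp: "E v c" "D c = D v + 1" using c by (auto simp: Ch_def)
      have wc: "w \<noteq> c" using wp cp by auto
      have deg: "degree V E v = 2" using nb wc by (simp add: degree_def)
      have topc: "top c = top v" using top_child cp vm by auto
      define s where "s = (if top v = t2 then 1 else 0 :: nat)"
      have Dv1: "D v \<ge> 1" using D0 v vm by (cases "D v") auto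
      have xv: "x v = pp (D v + s)" by (simp add: x_def s_def)
      have xc: "x c = pp (Suc (D v + s))" using cp topc by (simp add: x_def s_def)
      have xw: "x w = pp (D v - 1 + s)"
      proof (cases "D v \<ge> 2")
        case True
        then have "top w = top v" using top_par v w_def by auto
        moreover have "D w = D v - 1" using wp by simp
        ultimately show ?thesis by (simp add: x_def s_def)
      next
        case False
        then have "D w = 0" using wp by auto
        then have "w = m" using D0 wp by auto
        moreover have "D v - 1 + s = 0 \<or> D v - 1 + s = 1" using False s_def by auto
        ultimately show ?thesis using xm pp012 by auto
      qed
      obtain j where j: "D v + s = Suc j" using Dv1 by (cases "D v + s") auto
      have "D v - 1 + s = j" using j Dv1 by linarith
      moreover have "pp (Suc j) = pp j + pp (Suc (Suc j))" by (rule pp_rec)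
      ultimately have "x v = x w + x c" using xv xw xc j by simp
      then show ?thesis using nb wc deg by (simp add: laplacian_apply_def)
    qed
  qed
  show ?thesis unfolding laplacian_eigenvalue_def
  proof (intro exI[of _ x] conjI)
    show "\<exists>v\<in>V. x v \<noteq> 0" using xm assms(6) by (intro bexI[of _ m]) auto
    show "\<forall>v\<in>V. laplacian_apply V E x v = 1 * x v" using eq by blast
  qed
qed

end
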